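(* For all integers $n\ge k\ge0$ and all complex $r$: (i) $S_{n,k}(0,0;r)=\binom nk r^{n-k}$; (ii) $S_{n,k}(1,1;r)=\binom nk r^{\underline{n-k}}$; (iii) $S_{n,k}(-1,1;r)=\binom nk (n+r-1)^{\underline{n-k}}$; (iv) $S_{n,k}(1,2;r)=\binom nk\,k!\,2^{-(n-k)}\sum_{j=0}^{n-k}\frac{(-r)^{\overline j}(-n+k)^{\overline j}}{j!\,\Gamma(2k-n+1+j)}2^j$, where $1/\Gamma$ vanishes at nonpositive integers (i.e. $\binom nk\frac{k!}{(2k-n)!}2^{-(n-k)}{}_2F_1(-r,-n+k;-n+2k+1\mid2)$ suitably regularized); (v) $S_{n,k}(-2,-1;r)=\binom nk\frac{(2n-k)!}{n!}2^{-(n-k)}\sum_{j=0}^{n-k}\frac{(r-1)^{\overline j}(-n+k)^{\overline j}}{j!\,(-2n+k)^{\overline j}}2^j$, the sum being interpreted as $1$ when $n=k=0$.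
   Context: Hsu–Shiue Stirling numbers $S_{n,k}(a,b;r)$: defined by $S_{0,0}=1$, $S_{n,k}=0$ if $n<0$, $k<0$ or $k>n$, and $S_{n+1,k+1}=[-an+b(k+1)+r]S_{n,k+1}+S_{n,k}$ for $n\ge0$, $k\in\mathbb Z$. $x^{\underline m}=x(x-1)\cdots(x-m+1)$, $x^{\overline m}=x(x+1)\cdots(x+m-1)$. *)

theory Defs
  imports "HOL-Analysis.Analysis"
begin

text \<open>Hsu--Shiue Stirling numbers S(n,k;a,b,r) for n, k >= 0 (values at negative
indices are 0, so the k = 0 instance of the recurrence has no S(n,-1) term).\<close>
fun hs_stirling :: "complex \<Rightarrow> complex \<Rightarrow> complex \<Rightarrow> nat \<Rightarrow> nat \<Rightarrow> complex" where
  "hs_stirling a b r 0 0 = 1"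
| "hs_stirling a b r 0 (Suc k) = 0"
| "hs_stirling a b r (Suc n) 0 = (- a * of_nat n + r) * hs_stirling a b r n 0"
| "hs_stirling a b r (Suc n) (Suc k) =
     (- a * of_nat n + b * of_nat (Suc k) + r) * hs_stirling a b r n (Suc k)
     + hs_stirling a b r n k"

definition falling_fact :: "complex \<Rightarrow> nat \<Rightarrow> complex" where
  "falling_fact x m = (\<Prod>i<m. x - of_nat i)"

end

theory Submission
  imports Defs
begin

definition invf :: "int \<Rightarrow> complex" where
  "invf x = (if x < 0 then 0 else inverse (fact (nat x)))"

lemma invf_neg: "x < 0 \<Longrightarrow> invf x = 0" by (simp add: invf_def)

lemma fact_inv_step: "of_nat (Suc m) * inverse (fact (Suc m)) = (inverse (fact m) :: complex)"
proof -
  have nz: "(of_nat (Suc m) :: complex) \<noteq> 0" by (rule of_nat_neq_0)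
  have "(fact (Suc m) :: complex) = of_nat (Suc m) * fact m" by (rule fact_Suc)
  then show ?thesis using nz by (simp only: inverse_mult_distrib mult.assoc[symmetric] right_inverse) simp
qed

lemma invf_rec: "y = x - 1 \<Longrightarrow> invf y = of_int x * invf x"
proof -
  assume y: "y = x - 1"
  show ?thesis
  proof (cases "x \<le> 0")
    case True then show ?thesis using y by (cases "x = 0") (auto simp: invf_def)
  next
    case False
    have y0: "\<not> y < 0" using False y by simp
    have n: "nat x = Suc (nat y)" using False y by simp
    have xx: "(of_int x :: complex) = of_nat (Suc (nat y))" using False y by simp
    have i1: "invf x = inverse (fact (Suc (nat y)))" using False unfolding invf_def n by simp
    have i2: "invf y = inverse (fact (nat y))" using y0 unfolding invf_def by simp
    show ?thesis unfolding i1 i2 xx by (rule fact_inv_step[symmetric])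
  qed
qed

lemma invf_nat: "invf (int n) = inverse (fact n)" by (simp add: invf_def)

definition ffz :: "complex \<Rightarrow> int \<Rightarrow> complex" where
  "ffz r x = falling_fact r (nat x)"

lemma ffz_rec: "invf x * ((r - of_int x) * ffz r x) = invf x * ffz r (x + 1)"
proof (cases "x < 0")
  case True then show ?thesis by (simp add: invf_neg)
next
  case False
  then have "nat (x+1) = Suc (nat x)" by simp
  then show ?thesis using False by (simp add: ffz_def falling_fact_def mult_ac)
qed

definition rpz :: "complex \<Rightarrow> int \<Rightarrow> complex" where
  "rpz r x = pochhammer (r - 1) (nat x)"

lemma rpz_rec: "invf x * ((r - 1 + of_int x) * rpz r x) = invf x * rpz r (x + 1)"
proof (cases "x < 0")
  case True then show ?thesis by (simp add: invf_neg)
next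
  case False
  then have "nat (x+1) = Suc (nat x)" by simp
  then show ?thesis using False by (simp add: rpz_def pochhammer_Suc mult_ac)
qed

lemma sum_shift0:
  fixes U :: "nat \<Rightarrow> complex"
  assumes "U 0 = 0" "U N = 0"
  shows "(\<Sum>i<N. U (Suc i)) = (\<Sum>i<N. U i)"
proof -
  have "(\<Sum>i<Suc N. U i) = U 0 + (\<Sum>i<N. U (Suc i))" by (rule sum.lessThan_Suc_shift)
  moreover have "(\<Sum>i<Suc N. U i) = (\<Sum>i<N. U i) + U N" by simp
  ultimately show ?thesis using assms by simp
qed

lemma sum_bound:
  fixes t :: "nat \<Rightarrow> complex"
  assumes "\<And>i. i \<ge> K \<Longrightarrow> t i = 0" "K \<le> N"
  shows "(\<Sum>i<N. t i) = (\<Sum>i<K. t i)"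
  by (rule sum.mono_neutral_right) (use assms in auto)


definition T4 :: "complex \<Rightarrow> nat \<Rightarrow> int \<Rightarrow> nat \<Rightarrow> complex" where
  "T4 r n k i = fact n * invf (k - int i) * invf (int n - k - int i) * invf (int i) / 2 ^ i
     * ffz r (int n - k - int i)"

definition U4 :: "complex \<Rightarrow> nat \<Rightarrow> int \<Rightarrow> nat \<Rightarrow> complex" where
  "U4 r n k j = fact n * invf (k + 1 - int j) * invf (int n - k - int j) * invf (int j - 1) * 2 / 2 ^ j
     * ffz r (int n - k - int j)"

definition P4 :: "complex \<Rightarrow> nat \<Rightarrow> int \<Rightarrow> nat \<Rightarrow> complex" where
  "P4 r n k i = fact n * invf (k + 1 - int i) * of_int (int n - k - int i) * invf (int n - k - int i)
     * invf (int i) / 2 ^ i * ffz r (int n - k - int i)"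

lemma T4_step1: "T4 r (Suc n) (k+1) i = P4 r n k i + U4 r n k i + T4 r n k i"
proof -
  define m where "m = int n - k"
  define a where "a = invf (k + 1 - int i)"
  define b where "b = invf (m - int i)"
  define c where "c = invf (int i)"
  define f where "f = ffz r (m - int i)"
  have e1: "invf (k - int i) = of_int (k + 1 - int i) * a" unfolding a_def by (rule invf_rec) simp
  have e3: "invf (int i - 1) = of_int (int i) * c" unfolding c_def by (rule invf_rec) simp
  have L: "T4 r (Suc n) (k+1) i = fact (Suc n) * a * b * c / 2^i * f"
    unfolding T4_def a_def b_def c_def f_def m_def by (simp add: algebra_simps)
  have P: "P4 r n k i = fact n * a * of_int (m - int i) * b * c / 2^i * f"
    unfolding P4_def a_def b_def c_def f_def m_def by simp
  have U: "U4 r n k i = fact n * a * b * (of_int (int i) * c) * 2 / 2^i * f"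
    unfolding U4_def a_def b_def c_def f_def m_def e3 by simp
  have T: "T4 r n k i = fact n * (of_int (k + 1 - int i) * a) * b * c / 2^i * f"
    unfolding T4_def e1 by (simp add: a_def b_def c_def f_def m_def)
  have "of_int (m - int i) + of_int (int i) * 2 + of_int (k + 1 - int i) = (of_nat (Suc n) :: complex)"
    unfolding m_def by simp
  note S = this
  define X where "X = fact n * a * b * c / 2^i * f"
  have "P4 r n k i + U4 r n k i + T4 r n k i
     = X * (of_int (m - int i) + of_int (int i) * 2 + of_int (k + 1 - int i))"
    unfolding P U T X_def by (simp add: field_simps)
  also have "\<dots> = X * of_nat (Suc n)" using S by simp
  also have "\<dots> = T4 r (Suc n) (k+1) i" unfolding L X_def fact_Suc by (simp add: algebra_simps)
  finally show ?thesis by simp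
qed


lemma T4_step2: "((r - of_int (int n - k - 1 - int i)) + of_int (k + 1 - int i)) * T4 r n (k+1) i
   = P4 r n k i + U4 r n k (Suc i)"
proof -
  define x where "x = int n - k - 1 - int i"
  define a where "a = invf (k + 1 - int i)"
  define b where "b = invf (x + 1)"
  define c where "c = invf (int i)"
  have e1: "invf (k - int i) = of_int (k + 1 - int i) * a" unfolding a_def by (rule invf_rec) simp
  have e2: "invf x = of_int (x + 1) * b" unfolding b_def by (rule invf_rec) simp
  have fr: "invf x * ((r - of_int x) * ffz r x) = invf x * ffz r (x + 1)" by (rule ffz_rec)
  have T: "T4 r n (k+1) i = fact n * a * invf x * c / 2^i * ffz r x"
    unfolding T4_def a_def c_def x_def by (simp add: algebra_simps)
  have x1: "x + 1 = int n - k - int i" by (simp add: x_def)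
  have P0: "P4 r n k i = fact n * a * c / 2^i * (of_int (x + 1) * b * ffz r (x + 1))"
    unfolding P4_def a_def b_def c_def x1 by (simp add: mult_ac)
  have P: "P4 r n k i = fact n * a * c / 2^i * (invf x * ffz r (x + 1))"
    unfolding P0 e2 by simp
  have U: "U4 r n k (Suc i) = fact n * (of_int (k + 1 - int i) * a) * invf x * c / 2^i * ffz r x"
    unfolding U4_def e1[symmetric] by (simp add: a_def c_def x_def algebra_simps)
  show ?thesis unfolding T P U fr[symmetric] x_def[symmetric]
    by (simp add: field_simps)
qed


definition F4 :: "complex \<Rightarrow> nat \<Rightarrow> int \<Rightarrow> complex" where
  "F4 r n k = (\<Sum>i<Suc n. T4 r n k i)"

lemma T4_zero: "n < i \<Longrightarrow> T4 r n k i = 0"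
  by (cases "k - int i < 0") (auto simp: T4_def invf_neg)

lemma U4_zero: "Suc n < j \<Longrightarrow> U4 r n k j = 0"
  by (cases "k + 1 - int j < 0") (auto simp: U4_def invf_neg)

lemma U4_0: "U4 r n k 0 = 0"
  by (simp add: U4_def invf_neg)

lemma F4_bound: "Suc n \<le> N \<Longrightarrow> (\<Sum>i<N. T4 r n k i) = F4 r n k"
  unfolding F4_def by (rule sum_bound) (auto intro: T4_zero)

lemma F4_rec: "F4 r (Suc n) (k+1) = (r - of_nat n + 2 * of_int k + 2) * F4 r n (k+1) + F4 r n k"
proof -
  define N where "N = Suc (Suc n)"
  have NN: "Suc n \<le> N" by (simp add: N_def)
  have "F4 r (Suc n) (k+1) = (\<Sum>i<N. T4 r (Suc n) (k+1) i)" unfolding F4_def N_def by simp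
  also have "\<dots> = (\<Sum>i<N. P4 r n k i) + (\<Sum>i<N. U4 r n k i) + (\<Sum>i<N. T4 r n k i)"
    by (simp add: T4_step1 sum.distrib)
  also have "(\<Sum>i<N. U4 r n k i) = (\<Sum>i<N. U4 r n k (Suc i))"
    by (rule sum_shift0[symmetric]) (auto simp: U4_0 N_def intro: U4_zero)
  also have "(\<Sum>i<N. P4 r n k i) + (\<Sum>i<N. U4 r n k (Suc i))
      = (\<Sum>i<N. ((r - of_int (int n - k - 1 - int i)) + of_int (k + 1 - int i)) * T4 r n (k+1) i)"
    by (simp only: T4_step2 sum.distrib)
  also have "\<dots> = (\<Sum>i<N. (r - of_nat n + 2 * of_int k + 2) * T4 r n (k+1) i)"
    by (rule sum.cong) (auto simp: algebra_simps)
  also have "\<dots> = (r - of_nat n + 2 * of_int k + 2) * F4 r n (k+1)"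
    unfolding sum_distrib_left[symmetric] F4_bound[OF NN] ..
  also have "(\<Sum>i<N. T4 r n k i) = F4 r n k" by (rule F4_bound[OF NN])
  finally show ?thesis .
qed

lemma F4_neg: "F4 r n (-1) = 0"
  unfolding F4_def by (rule sum.neutral) (simp add: T4_def invf_neg)

lemma F4_big: "int n < k \<Longrightarrow> F4 r n k = 0"
  unfolding F4_def by (rule sum.neutral) (simp add: T4_def invf_neg)

lemma F4_00: "F4 r 0 0 = 1"
  by (simp add: F4_def T4_def invf_def ffz_def falling_fact_def)

lemma S4_F4: "hs_stirling 1 2 r n k = F4 r n (int k)"
proof (induction n arbitrary: k)
  case 0 then show ?case by (cases k) (auto simp: F4_00 F4_big)
next
  case (Suc n)
  show ?case
  proof (cases k)
    case 0
    have "F4 r (Suc n) (-1 + 1) = (r - of_nat n + 2 * of_int (-1) + 2) * F4 r n (-1 + 1) + F4 r n (-1)"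
      by (rule F4_rec)
    then have A: "F4 r (Suc n) 0 = (r - of_nat n) * F4 r n 0" by (simp add: F4_neg)
    have "hs_stirling 1 2 r (Suc n) 0 = (r - of_nat n) * hs_stirling 1 2 r n 0" by simp
    then show ?thesis using 0 Suc.IH[of 0] A by simp
  next
    case (Suc j)
    have "F4 r (Suc n) (int j + 1) = (r - of_nat n + 2 * of_int (int j) + 2) * F4 r n (int j + 1) + F4 r n (int j)"
      by (rule F4_rec)
    moreover have "hs_stirling 1 2 r (Suc n) (Suc j) = (r - of_nat n + 2 * of_int (int j) + 2) * hs_stirling 1 2 r n (Suc j) + hs_stirling 1 2 r n j"
      by (simp add: algebra_simps)
    ultimately show ?thesis using Suc Suc.IH[of j] Suc.IH[of "Suc j"] by (simp add: add.commute)
  qed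
qed


definition T5 :: "complex \<Rightarrow> nat \<Rightarrow> int \<Rightarrow> nat \<Rightarrow> complex" where
  "T5 r n k i = fact (n + i) * invf k * invf (int n - k - int i) * invf (int i) / 2 ^ i
     * rpz r (int n - k - int i)"

definition U5 :: "complex \<Rightarrow> nat \<Rightarrow> int \<Rightarrow> nat \<Rightarrow> complex" where
  "U5 r n k j = fact (n + j) * invf (k + 1) * invf (int n - k - int j) * invf (int j - 1) * 2 / 2 ^ j
     * rpz r (int n - k - int j)"

definition P5 :: "complex \<Rightarrow> nat \<Rightarrow> int \<Rightarrow> nat \<Rightarrow> complex" where
  "P5 r n k i = fact (n + i) * invf (k + 1) * of_int (int n - k - int i) * invf (int n - k - int i)
     * invf (int i) / 2 ^ i * rpz r (int n - k - int i)"

lemma T5_step1: "T5 r (Suc n) (k+1) i = P5 r n k i + U5 r n k i + T5 r n k i"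
proof -
  define m where "m = int n - k"
  define a where "a = invf (k + 1)"
  define b where "b = invf (m - int i)"
  define c where "c = invf (int i)"
  define f where "f = rpz r (m - int i)"
  define F where "F = (fact (n + i) :: complex)"
  have e1: "invf k = of_int (k + 1) * a" unfolding a_def by (rule invf_rec) simp
  have e3: "invf (int i - 1) = of_int (int i) * c" unfolding c_def by (rule invf_rec) simp
  have L: "T5 r (Suc n) (k+1) i = of_nat (Suc (n + i)) * F * a * b * c / 2^i * f"
    unfolding T5_def a_def b_def c_def f_def m_def F_def by (simp add: algebra_simps)
  have P: "P5 r n k i = F * a * of_int (m - int i) * b * c / 2^i * f"
    unfolding P5_def a_def b_def c_def f_def m_def F_def by simp
  have U: "U5 r n k i = F * a * b * (of_int (int i) * c) * 2 / 2^i * f"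
    unfolding U5_def a_def b_def c_def f_def m_def e3 F_def by simp
  have T: "T5 r n k i = F * (of_int (k + 1) * a) * b * c / 2^i * f"
    unfolding T5_def e1 by (simp add: a_def b_def c_def f_def m_def F_def)
  have "of_int (m - int i) + of_int (int i) * 2 + of_int (k + 1) = (of_nat (Suc (n + i)) :: complex)"
    unfolding m_def by simp
  note S = this
  define X where "X = F * a * b * c / 2^i * f"
  have "P5 r n k i + U5 r n k i + T5 r n k i
     = X * (of_int (m - int i) + of_int (int i) * 2 + of_int (k + 1))"
    unfolding P U T X_def by (simp add: field_simps)
  also have "\<dots> = X * of_nat (Suc (n + i))" using S by simp
  also have "\<dots> = T5 r (Suc n) (k+1) i" unfolding L X_def by (simp add: algebra_simps)
  finally show ?thesis by simp
qed

lemma T5_step2: "((r - 1 + of_int (int n - k - 1 - int i)) + of_nat (Suc (n + i))) * T5 r n (k+1) i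
   = P5 r n k i + U5 r n k (Suc i)"
proof -
  define x where "x = int n - k - 1 - int i"
  define a where "a = invf (k + 1)"
  define b where "b = invf (x + 1)"
  define c where "c = invf (int i)"
  define F where "F = (fact (n + i) :: complex)"
  have e2: "invf x = of_int (x + 1) * b" unfolding b_def by (rule invf_rec) simp
  have fr: "invf x * ((r - 1 + of_int x) * rpz r x) = invf x * rpz r (x + 1)" by (rule rpz_rec)
  have x1: "x + 1 = int n - k - int i" by (simp add: x_def)
  have T: "T5 r n (k+1) i = F * a * invf x * c / 2^i * rpz r x"
    unfolding T5_def a_def c_def x_def F_def by (simp add: algebra_simps)
  have P0: "P5 r n k i = F * a * c / 2^i * (of_int (x + 1) * b * rpz r (x + 1))"
    unfolding P5_def a_def b_def c_def x1 F_def by (simp add: mult_ac)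
  have P: "P5 r n k i = F * a * c / 2^i * (invf x * rpz r (x + 1))"
    unfolding P0 e2 by simp
  have U: "U5 r n k (Suc i) = of_nat (Suc (n + i)) * (F * a) * invf x * c / 2^i * rpz r x"
  proof -
    have f1: "fact (n + Suc i) = (of_nat (Suc (n+i)) :: complex) * F" by (simp add: F_def)
    have f2: "int n - k - int (Suc i) = x" by (simp add: x_def)
    have f3: "int (Suc i) - 1 = int i" by simp
    show ?thesis unfolding U5_def f1 f2 f3 by (simp add: a_def c_def field_simps)
  qed
  have gen: "\<And>A B G. (A + B) * (G * invf x * c / 2^i * rpz r x)
     = G * c / 2^i * (invf x * (A * rpz r x)) + B * G * invf x * c / 2^i * rpz r x"
    by (simp add: ring_distribs mult_ac add_divide_distrib)
  show ?thesis unfolding T P U fr[symmetric] x_def[symmetric] by (rule gen)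
qed

definition F5 :: "complex \<Rightarrow> nat \<Rightarrow> int \<Rightarrow> complex" where
  "F5 r n k = (\<Sum>i<Suc n. T5 r n k i)"

lemma T5_zero: "n < i \<Longrightarrow> T5 r n k i = 0"
  by (cases "k < 0") (auto simp: T5_def invf_neg)

lemma U5_zero: "Suc n < j \<Longrightarrow> U5 r n k j = 0"
  by (cases "k + 1 < 0") (auto simp: U5_def invf_neg)

lemma U5_0: "U5 r n k 0 = 0"
  by (simp add: U5_def invf_neg)

lemma F5_bound: "Suc n \<le> N \<Longrightarrow> (\<Sum>i<N. T5 r n k i) = F5 r n k"
  unfolding F5_def by (rule sum_bound) (auto intro: T5_zero)

lemma F5_rec: "F5 r (Suc n) (k+1) = (2 * of_nat n - of_int k - 1 + r) * F5 r n (k+1) + F5 r n k"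
proof -
  define N where "N = Suc (Suc n)"
  have NN: "Suc n \<le> N" by (simp add: N_def)
  have "F5 r (Suc n) (k+1) = (\<Sum>i<N. T5 r (Suc n) (k+1) i)" unfolding F5_def N_def by simp
  also have "\<dots> = (\<Sum>i<N. P5 r n k i) + (\<Sum>i<N. U5 r n k i) + (\<Sum>i<N. T5 r n k i)"
    by (simp add: T5_step1 sum.distrib)
  also have "(\<Sum>i<N. U5 r n k i) = (\<Sum>i<N. U5 r n k (Suc i))"
    by (rule sum_shift0[symmetric]) (auto simp: U5_0 N_def intro: U5_zero)
  also have "(\<Sum>i<N. P5 r n k i) + (\<Sum>i<N. U5 r n k (Suc i))
      = (\<Sum>i<N. ((r - 1 + of_int (int n - k - 1 - int i)) + of_nat (Suc (n + i))) * T5 r n (k+1) i)"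
    by (simp only: T5_step2 sum.distrib)
  also have "\<dots> = (\<Sum>i<N. (2 * of_nat n - of_int k - 1 + r) * T5 r n (k+1) i)"
    by (rule sum.cong) (auto simp: algebra_simps)
  also have "\<dots> = (2 * of_nat n - of_int k - 1 + r) * F5 r n (k+1)"
    unfolding sum_distrib_left[symmetric] F5_bound[OF NN] ..
  also have "(\<Sum>i<N. T5 r n k i) = F5 r n k" by (rule F5_bound[OF NN])
  finally show ?thesis .
qed

lemma F5_neg: "F5 r n (-1) = 0"
  unfolding F5_def by (rule sum.neutral) (simp add: T5_def invf_neg)

lemma F5_big: "int n < k \<Longrightarrow> F5 r n k = 0"
  unfolding F5_def by (rule sum.neutral) (simp add: T5_def invf_neg)

lemma F5_00: "F5 r 0 0 = 1"
  by (simp add: F5_def T5_def invf_def rpz_def)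

lemma S5_F5: "hs_stirling (-2) (-1) r n k = F5 r n (int k)"
proof (induction n arbitrary: k)
  case 0 then show ?case by (cases k) (auto simp: F5_00 F5_big)
next
  case (Suc n)
  show ?case
  proof (cases k)
    case 0
    have "F5 r (Suc n) (-1 + 1) = (2 * of_nat n - of_int (-1) - 1 + r) * F5 r n (-1 + 1) + F5 r n (-1)"
      by (rule F5_rec)
    then show ?thesis using 0 Suc.IH[of 0] by (simp add: F5_neg algebra_simps)
  next
    case (Suc j)
    have "F5 r (Suc n) (int j + 1) = (2 * of_nat n - of_int (int j) - 1 + r) * F5 r n (int j + 1) + F5 r n (int j)"
      by (rule F5_rec)
    moreover have "hs_stirling 1 2 r (Suc n) (Suc j) = (r - of_nat n + 2 * of_int (int j) + 2) * hs_stirling 1 2 r n (Suc j) + hs_stirling 1 2 r n j"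
      by (simp add: algebra_simps)
    ultimately show ?thesis using Suc Suc.IH[of j] Suc.IH[of "Suc j"] by (simp add: add.commute)
  qed
qed


lemma ff_Suc: "falling_fact x (Suc j) = falling_fact x j * (x - of_nat j)"
  by (simp add: falling_fact_def)

lemma ff_Suc': "falling_fact x (Suc j) = x * falling_fact (x - 1) j"
proof -
  have "falling_fact x (Suc j) = (x - of_nat 0) * (\<Prod>i<j. x - of_nat (Suc i))"
    unfolding falling_fact_def by (rule prod.lessThan_Suc_shift)
  also have "(\<Prod>i<j. x - of_nat (Suc i)) = falling_fact (x - 1) j"
    unfolding falling_fact_def by (rule prod.cong) (auto simp: algebra_simps)
  finally show ?thesis by simp
qed

lemma gen_rec:
  fixes a b r :: complex and G :: "nat \<Rightarrow> int \<Rightarrow> complex"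
  assumes G0: "G 0 0 = 1"
  and H: "\<And>n j. of_nat (Suc n) * G (Suc n) (int j)
     = (- a * of_nat n + b * (of_int (int n - int j) + 1) + r) * of_nat j * G n (int j - 1)
       + of_int (int n - int j + 1) * G n (int j)"
  shows "hs_stirling a b r n k = fact n * invf (int k) * invf (int n - int k) * G n (int n - int k)"
proof -
  have H': "invf (int n - k) * (of_nat (Suc n) * G (Suc n) (int n - k))
     = invf (int n - k) * ((- a * of_nat n + b * (of_int k + 1) + r) * of_int (int n - k) * G n (int n - k - 1)
        + of_int (k + 1) * G n (int n - k))" for n k
  proof (cases "int n - k < 0")
    case True then show ?thesis by (simp add: invf_neg)
  next
    case False
    then obtain j where j: "int n - k = int j" by (metis nonneg_int_cases not_less)
    have k: "k = int n - int j" using j by simp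
    show ?thesis unfolding j using H[of n j] by (simp add: k)
  qed
  show ?thesis
  proof (induction n arbitrary: k)
    case 0 then show ?case by (cases k) (auto simp: G0 invf_def)
  next
    case (Suc n)
    show ?case
    proof (cases k)
      case 0
      have h: "invf (int n + 1) * (of_nat (Suc n) * G (Suc n) (int n + 1))
        = invf (int n + 1) * ((- a * of_nat n + r) * of_int (int n + 1) * G n (int n))"
        using H'[of n "-1"] by simp
      have e: "invf (int n) = of_int (int n + 1) * invf (int n + 1)" by (rule invf_rec) simp
      have "hs_stirling a b r (Suc n) k = (- a * of_nat n + r) * (fact n * invf (int n) * G n (int n))"
        using 0 Suc.IH[of 0] by (simp add: invf_def)
      also have "\<dots> = fact n * (invf (int n + 1) * ((- a * of_nat n + r) * of_int (int n + 1) * G n (int n)))"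
        unfolding e by (simp add: mult_ac)
      also have "\<dots> = fact n * (invf (int n + 1) * (of_nat (Suc n) * G (Suc n) (int n + 1)))"
        unfolding h ..
      also have "\<dots> = fact (Suc n) * invf (int 0) * invf (int (Suc n) - int 0) * G (Suc n) (int (Suc n) - int 0)"
      proof -
        have ii: "int (Suc n) - int 0 = int n + 1" by simp
        show ?thesis unfolding ii by (simp add: invf_def mult_ac)
      qed
      finally show ?thesis using 0 by simp
    next
      case (Suc j)
      define K where "K = int j"
      define m where "m = int n - K"
      have h: "invf m * (of_nat (Suc n) * G (Suc n) m)
        = invf m * ((- a * of_nat n + b * (of_int K + 1) + r) * of_int m * G n (m - 1)
          + of_int (K + 1) * G n m)"
        using H'[of n K] by (simp add: m_def)
      have e1: "invf K = of_int (K + 1) * invf (K + 1)" by (rule invf_rec) simp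
      have e2: "invf (m - 1) = of_int m * invf m" by (rule invf_rec) simp
      have "hs_stirling a b r (Suc n) k
          = (- a * of_nat n + b * (of_int K + 1) + r) * (fact n * invf (K + 1) * invf (m - 1) * G n (m - 1))
            + fact n * invf K * invf m * G n m"
        using Suc.IH[of j] Suc.IH[of "Suc j"] Suc by (simp add: K_def m_def algebra_simps)
      also have "\<dots> = fact n * invf (K + 1) * (invf m * ((- a * of_nat n + b * (of_int K + 1) + r) * of_int m * G n (m - 1)
          + of_int (K + 1) * G n m))"
        unfolding e1 e2 by (simp add: algebra_simps)
      also have "\<dots> = fact n * invf (K + 1) * (invf m * (of_nat (Suc n) * G (Suc n) m))"
        unfolding h ..
      also have "\<dots> = fact (Suc n) * invf (int k) * invf (int (Suc n) - int k) * G (Suc n) (int (Suc n) - int k)"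
      proof -
        have i1: "int k = K + 1" using Suc K_def by simp
        have i2: "int (Suc n) - int k = m" using Suc by (simp add: K_def m_def)
        show ?thesis unfolding i1 i2 by (simp add: mult_ac m_def[symmetric])
      qed
      finally show ?thesis .
    qed
  qed
qed

lemma invf_binom: "k \<le> n \<Longrightarrow> fact n * invf (int k) * invf (int n - int k) = (of_nat (n choose k) :: complex)"
proof -
  assume kn: "k \<le> n"
  have "nat (int n - int k) = n - k" using kn by simp
  then show ?thesis using kn by (simp add: invf_def binomial_fact field_simps)
qed


lemma part1: "k \<le> n \<Longrightarrow> hs_stirling 0 0 r n k = of_nat (n choose k) * r ^ (n - k)"
proof -
  assume kn: "k \<le> n"
  have "hs_stirling 0 0 r n k = fact n * invf (int k) * invf (int n - int k) * r ^ nat (int n - int k)"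
  proof (rule gen_rec[where G = "\<lambda>n m. r ^ nat m"])
    fix n j
    show "of_nat (Suc n) * r ^ nat (int j)
     = (- 0 * of_nat n + 0 * (of_int (int n - int j) + 1) + r) * of_nat j * r ^ nat (int j - 1)
       + of_int (int n - int j + 1) * r ^ nat (int j)"
    proof (cases j)
      case 0 then show ?thesis by simp
    next
      case (Suc i)
      have n2: "nat (int j - 1) = i" using Suc by simp
      have n1: "nat (int j) = Suc i" using Suc by simp
      show ?thesis unfolding n1 n2 using Suc by (simp add: algebra_simps)
    qed
  qed simp
  also have "\<dots> = of_nat (n choose k) * r ^ (n - k)"
    using invf_binom[OF kn] kn by (simp add: nat_diff_distrib)
  finally show ?thesis .
qed

lemma part2: "k \<le> n \<Longrightarrow> hs_stirling 1 1 r n k = of_nat (n choose k) * falling_fact r (n - k)"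
proof -
  assume kn: "k \<le> n"
  have "hs_stirling 1 1 r n k = fact n * invf (int k) * invf (int n - int k) * falling_fact r (nat (int n - int k))"
  proof (rule gen_rec[where G = "\<lambda>n m. falling_fact r (nat m)"])
    fix n j
    show "of_nat (Suc n) * falling_fact r (nat (int j))
     = (- 1 * of_nat n + 1 * (of_int (int n - int j) + 1) + r) * of_nat j * falling_fact r (nat (int j - 1))
       + of_int (int n - int j + 1) * falling_fact r (nat (int j))"
    proof (cases j)
      case 0 then show ?thesis by (simp add: falling_fact_def)
    next
      case (Suc i)
      have n2: "nat (int j - 1) = i" using Suc by simp
      have n1: "nat (int j) = Suc i" using Suc by simp
      show ?thesis unfolding n1 n2 ff_Suc using Suc by (simp add: algebra_simps)
    qed
  qed (simp add: falling_fact_def)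
  also have "\<dots> = of_nat (n choose k) * falling_fact r (n - k)"
    using invf_binom[OF kn] kn by (simp add: nat_diff_distrib)
  finally show ?thesis .
qed

lemma part3: "k \<le> n \<Longrightarrow> hs_stirling (-1) 1 r n k = of_nat (n choose k) * falling_fact (of_nat n + r - 1) (n - k)"
proof -
  assume kn: "k \<le> n"
  have "hs_stirling (-1) 1 r n k = fact n * invf (int k) * invf (int n - int k) * falling_fact (of_nat n + r - 1) (nat (int n - int k))"
  proof (rule gen_rec[where G = "\<lambda>n m. falling_fact (of_nat n + r - 1) (nat m)"])
    fix n j
    show "of_nat (Suc n) * falling_fact (of_nat (Suc n) + r - 1) (nat (int j))
     = (- (-1) * of_nat n + 1 * (of_int (int n - int j) + 1) + r) * of_nat j * falling_fact (of_nat n + r - 1) (nat (int j - 1))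
       + of_int (int n - int j + 1) * falling_fact (of_nat n + r - 1) (nat (int j))"
    proof (cases j)
      case 0 then show ?thesis by (simp add: falling_fact_def)
    next
      case (Suc i)
      have n2: "nat (int j - 1) = i" using Suc by simp
      have n1: "nat (int j) = Suc i" using Suc by simp
      have hh: "falling_fact (of_nat (Suc n) + r - 1) (Suc i) = (of_nat n + r) * falling_fact (of_nat n + r - 1) i"
        using ff_Suc'[of "of_nat (Suc n) + r - 1" i] by (simp add: algebra_simps)
      show ?thesis unfolding n1 n2 hh unfolding ff_Suc using Suc by (simp add: algebra_simps)
    qed
  qed (simp add: falling_fact_def)
  also have "\<dots> = of_nat (n choose k) * falling_fact (of_nat n + r - 1) (n - k)"
    using invf_binom[OF kn] kn by (simp add: nat_diff_distrib)
  finally show ?thesis .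
qed


lemma poch_neg: "pochhammer (- x) j = (-1) ^ j * falling_fact x j"
  by (induction j) (simp_all add: pochhammer_Suc ff_Suc falling_fact_def algebra_simps)

lemma ff_nat: "j \<le> m \<Longrightarrow> falling_fact (of_nat m) j = fact m / fact (m - j)"
proof (induction j)
  case 0 then show ?case by (simp add: falling_fact_def)
next
  case (Suc j)
  then have jm: "j < m" by simp
  then have e: "m - j = Suc (m - Suc j)" by simp
  have "falling_fact (of_nat m) (Suc j) = fact m / fact (m - j) * (of_nat m - of_nat j)"
    using Suc by (simp add: ff_Suc)
  also have "(of_nat m - of_nat j :: complex) = of_nat (Suc (m - Suc j))"
    using jm by (simp add: of_nat_diff)
  also have "fact m / fact (m - j) * (of_nat (Suc (m - Suc j)) :: complex) = fact m / fact (m - Suc j)"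
    unfolding e fact_Suc by (simp add: field_simps del: of_nat_Suc)
  finally show ?case .
qed

lemma rG: "rGamma (of_int (x + 1)) = invf x"
proof -
  have "rGamma (of_int (x + 1) :: complex) = (if x + 1 > 0 then inverse (fact (nat (x + 1 - 1))) else 0)"
    by (rule rGamma_of_int)
  then show ?thesis by (simp add: invf_def)
qed

lemma sq_neg1: "(-1::complex) ^ j * (-1) ^ j = 1"
  by (simp add: power_mult_distrib[symmetric])

lemma field4:
  fixes A B M J D X F P Q s :: complex
  assumes "B \<noteq> 0" "M \<noteq> 0" "J \<noteq> 0" "D \<noteq> 0" "P \<noteq> 0" "Q \<noteq> 0" "s * s = 1"
  shows "A * X * inverse J * inverse D / P * F = (A / (B * M)) * B / (P * Q) * ((s * F) * (s * (M / D)) / J * X * Q)"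
proof -
  have "(A / (B * M)) * B / (P * Q) * ((s * F) * (s * (M / D)) / J * X * Q)
      = (s * s) * (A * X * F) / (J * D * P)"
    using assms by (simp add: field_simps)
  then show ?thesis using assms by (simp add: field_simps)
qed

lemma field5:
  fixes A B M J D R W V P Q s :: complex
  assumes "A \<noteq> 0" "B \<noteq> 0" "M \<noteq> 0" "J \<noteq> 0" "D \<noteq> 0" "W \<noteq> 0" "V \<noteq> 0" "P \<noteq> 0" "Q \<noteq> 0" "s * s = 1"
  shows "V * inverse B * inverse J * inverse D / P * R
     = (A / (B * M)) * W / A / (P * Q) * (R * (s * (M / D)) / (J * (s * (W / V))) * Q)"
proof -
  have s0: "s \<noteq> 0" using assms(10) by auto
  have "(A / (B * M)) * W / A / (P * Q) * (R * (s * (M / D)) / (J * (s * (W / V))) * Q)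
      = V * R / (B * J * D * P)"
    using assms s0 by (simp add: field_simps)
  then show ?thesis using assms by (simp add: field_simps)
qed

lemma part4:
  assumes kn: "k \<le> n"
  shows "hs_stirling 1 2 r n k = of_nat (n choose k) * fact k / 2 ^ (n - k) *
           (\<Sum>j=0..n-k. pochhammer (-r) j * pochhammer (- of_nat n + of_nat k) j
              / fact j * rGamma (of_int (2 * int k - int n + 1 + int j)) * 2 ^ j)"
proof -
  define m where "m = n - k"
  have nm: "n = k + m" using kn m_def by simp
  have "hs_stirling 1 2 r n k = (\<Sum>i<Suc n. T4 r n (int k) i)" by (simp add: S4_F4 F4_def)
  also have "\<dots> = (\<Sum>i<Suc m. T4 r n (int k) i)"
    by (rule sum_bound) (auto simp: T4_def invf_neg nm)
  also have "\<dots> = (\<Sum>i=0..m. T4 r n (int k) i)" by (simp add: lessThan_Suc_atMost atLeast0AtMost)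
  also have "\<dots> = (\<Sum>j=0..m. T4 r n (int k) (m - j))"
    using sum.atLeastAtMost_rev[of "T4 r n (int k)" 0 m] by simp
  also have "\<dots> = (\<Sum>j=0..m. of_nat (n choose k) * fact k / 2 ^ m *
           (pochhammer (-r) j * pochhammer (- of_nat n + of_nat k) j
              / fact j * rGamma (of_int (2 * int k - int n + 1 + int j)) * 2 ^ j))"
  proof (rule sum.cong)
    fix j assume "j \<in> {0..m}"
    then have jm: "j \<le> m" by simp
    have i1: "int n - int k - int (m - j) = int j" using jm nm by simp
    have i2: "2 * int k - int n + 1 + int j = (int k - int (m - j)) + 1" using jm nm by simp
    have c1: "(- of_nat n + of_nat k :: complex) = - of_nat m" using nm by simp
    have c2: "(of_nat (n choose k) :: complex) = fact n / (fact k * fact m)"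
      using kn by (simp add: binomial_fact m_def)
    have p2: "(2::complex) ^ m = 2 ^ (m - j) * 2 ^ j" using jm by (simp add: power_add[symmetric])
    have "T4 r n (int k) (m - j) = fact n * invf (int k - int (m - j)) * inverse (fact j) * inverse (fact (m - j))
        / 2 ^ (m - j) * falling_fact r j"
      unfolding T4_def i1 by (simp add: invf_nat ffz_def mult_ac)
    also have "\<dots> = (fact n / (fact k * fact m)) * fact k / (2 ^ (m - j) * 2 ^ j) *
         (((-1)^j * falling_fact r j) * ((-1)^j * (fact m / fact (m - j))) / fact j * invf (int k - int (m - j)) * 2 ^ j)"
      by (rule field4) (simp_all add: sq_neg1)
    also have "\<dots> = of_nat (n choose k) * fact k / 2 ^ m *
           (pochhammer (-r) j * pochhammer (- of_nat n + of_nat k) j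
              / fact j * rGamma (of_int (2 * int k - int n + 1 + int j)) * 2 ^ j)"
      unfolding c1 c2 p2 i2 rG poch_neg ff_nat[OF jm] ..
    finally show "T4 r n (int k) (m - j) = of_nat (n choose k) * fact k / 2 ^ m *
           (pochhammer (-r) j * pochhammer (- of_nat n + of_nat k) j
              / fact j * rGamma (of_int (2 * int k - int n + 1 + int j)) * 2 ^ j)" .
  qed simp
  also have "\<dots> = of_nat (n choose k) * fact k / 2 ^ (n - k) *
           (\<Sum>j=0..n-k. pochhammer (-r) j * pochhammer (- of_nat n + of_nat k) j
              / fact j * rGamma (of_int (2 * int k - int n + 1 + int j)) * 2 ^ j)"
    by (simp add: sum_distrib_left m_def)
  finally show ?thesis .
qed


lemma part5:
  assumes kn: "k \<le> n"
  shows "hs_stirling (-2) (-1) r n k = of_nat (n choose k) * fact (2 * n - k) / fact n / 2 ^ (n - k) *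
           (\<Sum>j=0..n-k. pochhammer (r - 1) j * pochhammer (- of_nat n + of_nat k) j
              / (fact j * pochhammer (- 2 * of_nat n + of_nat k) j) * 2 ^ j)"
proof -
  define m where "m = n - k"
  have nm: "n = k + m" using kn m_def by simp
  have "hs_stirling (-2) (-1) r n k = (\<Sum>i<Suc n. T5 r n (int k) i)" by (simp add: S5_F5 F5_def)
  also have "\<dots> = (\<Sum>i<Suc m. T5 r n (int k) i)"
    by (rule sum_bound) (auto simp: T5_def invf_neg nm)
  also have "\<dots> = (\<Sum>i=0..m. T5 r n (int k) i)" by (simp add: lessThan_Suc_atMost atLeast0AtMost)
  also have "\<dots> = (\<Sum>j=0..m. T5 r n (int k) (m - j))"
    using sum.atLeastAtMost_rev[of "T5 r n (int k)" 0 m] by simp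
  also have "\<dots> = (\<Sum>j=0..m. of_nat (n choose k) * fact (2 * n - k) / fact n / 2 ^ m *
           (pochhammer (r - 1) j * pochhammer (- of_nat n + of_nat k) j
              / (fact j * pochhammer (- 2 * of_nat n + of_nat k) j) * 2 ^ j))"
  proof (rule sum.cong)
    fix j assume "j \<in> {0..m}"
    then have jm: "j \<le> m" by simp
    have jw: "j \<le> 2 * n - k" using jm nm by simp
    have i1: "int n - int k - int (m - j) = int j" using jm nm by simp
    have n1: "n + (m - j) = 2 * n - k - j" using jm nm by simp
    have c1: "(- of_nat n + of_nat k :: complex) = - of_nat m" using nm by simp
    have c3: "(- 2 * of_nat n + of_nat k :: complex) = - of_nat (2 * n - k)" using kn by (simp add: of_nat_diff)
    have c2: "(of_nat (n choose k) :: complex) = fact n / (fact k * fact m)"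
      using kn by (simp add: binomial_fact m_def)
    have p2: "(2::complex) ^ m = 2 ^ (m - j) * 2 ^ j" using jm by (simp add: power_add[symmetric])
    have "T5 r n (int k) (m - j) = fact (2 * n - k - j) * inverse (fact k) * inverse (fact j) * inverse (fact (m - j))
        / 2 ^ (m - j) * pochhammer (r - 1) j"
      unfolding T5_def i1 n1 by (simp add: invf_nat rpz_def mult_ac)
    also have "\<dots> = (fact n / (fact k * fact m)) * fact (2 * n - k) / fact n / (2 ^ (m - j) * 2 ^ j) *
         (pochhammer (r - 1) j * ((-1)^j * (fact m / fact (m - j))) /
            (fact j * ((-1)^j * (fact (2 * n - k) / fact (2 * n - k - j)))) * 2 ^ j)"
      by (rule field5) (simp_all add: sq_neg1)
    also have "\<dots> = of_nat (n choose k) * fact (2 * n - k) / fact n / 2 ^ m *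
           (pochhammer (r - 1) j * pochhammer (- of_nat n + of_nat k) j
              / (fact j * pochhammer (- 2 * of_nat n + of_nat k) j) * 2 ^ j)"
      unfolding c1 c2 c3 p2 poch_neg ff_nat[OF jm] ff_nat[OF jw] ..
    finally show "T5 r n (int k) (m - j) = of_nat (n choose k) * fact (2 * n - k) / fact n / 2 ^ m *
           (pochhammer (r - 1) j * pochhammer (- of_nat n + of_nat k) j
              / (fact j * pochhammer (- 2 * of_nat n + of_nat k) j) * 2 ^ j)" .
  qed simp
  also have "\<dots> = of_nat (n choose k) * fact (2 * n - k) / fact n / 2 ^ (n - k) *
           (\<Sum>j=0..n-k. pochhammer (r - 1) j * pochhammer (- of_nat n + of_nat k) j
              / (fact j * pochhammer (- 2 * of_nat n + of_nat k) j) * 2 ^ j)"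
    by (simp add: sum_distrib_left m_def)
  finally show ?thesis .
qed

theorem mainTheorem14:
  fixes n k :: nat and r :: complex
  assumes "k \<le> n"
  shows "(hs_stirling 0 0 r n k = of_nat (n choose k) * r ^ (n - k))
    \<and> (hs_stirling 1 1 r n k = of_nat (n choose k) * falling_fact r (n - k))
    \<and> (hs_stirling (-1) 1 r n k = of_nat (n choose k) * falling_fact (of_nat n + r - 1) (n - k))
    \<and> (hs_stirling 1 2 r n k = of_nat (n choose k) * fact k / 2 ^ (n - k) *
           (\<Sum>j=0..n-k. pochhammer (-r) j * pochhammer (- of_nat n + of_nat k) j
              / fact j * rGamma (of_int (2 * int k - int n + 1 + int j)) * 2 ^ j))
    \<and> (hs_stirling (-2) (-1) r n k = of_nat (n choose k) * fact (2 * n - k) / fact n / 2 ^ (n - k) *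
           (\<Sum>j=0..n-k. pochhammer (r - 1) j * pochhammer (- of_nat n + of_nat k) j
              / (fact j * pochhammer (- 2 * of_nat n + of_nat k) j) * 2 ^ j))"
  using part1[OF assms] part2[OF assms] part3[OF assms] part4[OF assms] part5[OF assms] by blast

end
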